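(* For every positive integer $n$: $${}_3F_2\left[\begin{matrix}-n,\ \frac{n+1}2,\ \frac n2\\ \frac13,\ \frac23\end{matrix};1\right]=\frac{1+2(-8)^n}{3\cdot4^n},\qquad {}_3F_2\left[\begin{matrix}-n,\ \frac{n+1}2,\ \frac{n+2}2\\ \frac23,\ \frac43\end{matrix};1\right]=\frac{4(-8)^n-1}{3(3n+1)4^n},$$ $${}_3F_2\left[\begin{matrix}-n,\ \frac{n+3}2,\ \frac{n+2}2\\ \frac43,\ \frac53\end{matrix};1\right]=\frac{2(1-(-8)^{n+1})}{9(n+1)(3n+2)4^n},\qquad {}_3F_2\left[\begin{matrix}-n,\ \frac{n+1}2,\ \frac{n+2}2\\ \frac13,\ \frac23\end{matrix};1\right]=\frac{1+2(9n+4)(-8)^n}{9\cdot4^n},$$ $${}_3F_2\left[\begin{matrix}-n,\ \frac{n+3}2,\ \frac{n+2}2\\ \frac23,\ \frac43\end{matrix};1\right]=\frac{4(9n+7)(-8)^n-1}{27(n+1)4^n},\qquad {}_3F_2\left[\begin{matrix}-n,\ \frac{n+4}2,\ \frac{n+3}2\\ \frac43,\ \frac53\end{matrix};1\right]=\frac{2(1-(9n+10)(-8)^{n+1})}{81(n+1)(n+2)4^n}.$$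
   Context: ${}_3F_2\left[\begin{matrix}a_1,a_2,a_3\\ b_1,b_2\end{matrix};x\right]=\sum_{k\ge0}\frac{(a_1)_k(a_2)_k(a_3)_k}{(b_1)_k(b_2)_k}\frac{x^k}{k!}$, $(x)_k=x(x+1)\cdots(x+k-1)$, $(x)_0=1$; with $a_1=-n$ the series is a finite sum. *)

theory Defs
  imports Complex_Main
begin

text \<open>Terminating hypergeometric series 3F2 with top parameter -n:
  terms with k > n vanish since pochhammer (-n) k = 0 for k > n.\<close>
definition hyp3F2_term :: "nat \<Rightarrow> real \<Rightarrow> real \<Rightarrow> real \<Rightarrow> real \<Rightarrow> real \<Rightarrow> real" where
  "hyp3F2_term n a2 a3 b1 b2 x =
     (\<Sum>k\<le>n. pochhammer (- real n) k * pochhammer a2 k * pochhammer a3 k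
          / (pochhammer b1 k * pochhammer b2 k) * x ^ k / fact k)"

end

theory Submission imports Defs begin

lemma binom_absorb_real:
  "(real m + 1 - real k) * real (Suc m choose k) = (real m + 1) * real (m choose k)"
proof -
  have e1: "real (Suc m choose k) = (real m + 1) gchoose k"
    using binomial_gbinomial[of "Suc m" k] by (simp add: add.commute)
  have e2: "real (m choose k) = (real m + 1 - 1) gchoose k"
    using binomial_gbinomial[of m k] by simp
  show ?thesis unfolding e1 e2 by (rule gbinomial_absorb_comp)
qed

lemma binom_rel0:
  "real (n choose k) * ((real n + 2) * (real n + 1)) =
   real (Suc (Suc n) choose k) * ((real n + 2 - real k) * (real n + 1 - real k))"
proof -
  have a: "(real n + 1 - real k) * real (Suc n choose k) = (real n + 1) * real (n choose k)"
    by (rule binom_absorb_real)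
  have b: "(real n + 2 - real k) * real (Suc (Suc n) choose k) = (real n + 2) * real (Suc n choose k)"
    using binom_absorb_real[of "Suc n" k] by (simp add: algebra_simps)
  have "real (n choose k) * ((real n + 2) * (real n + 1)) = (real n + 2) * ((real n + 1) * real (n choose k))"
    by (simp add: algebra_simps)
  also have "\<dots> = (real n + 2) * real (Suc n choose k) * (real n + 1 - real k)"
    using a by (simp add: algebra_simps)
  also have "\<dots> = ((real n + 2 - real k) * real (Suc (Suc n) choose k)) * (real n + 1 - real k)"
    using b by simp
  also have "\<dots> = real (Suc (Suc n) choose k) * ((real n + 2 - real k) * (real n + 1 - real k))"
    by (simp add: algebra_simps)
  finally show ?thesis .
qed

lemma binom_rel1:
  "real (Suc n choose k) * (real n + 2) =
   real (Suc (Suc n) choose k) * (real n + 2 - real k)"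
  using binom_absorb_real[of "Suc n" k] by (simp add: algebra_simps)

lemma binom_relS:
  "real (m choose Suc k) * (real k + 1) = real (m choose k) * (real m - real k)"
proof -
  have "real m * (real m gchoose k) = real k * (real m gchoose k) + real (Suc k) * (real m gchoose Suc k)"
    by (rule gbinomial_mult_1)
  then show ?thesis by (simp add: binomial_gbinomial[symmetric] algebra_simps)
qed

lemma poch_shift: "pochhammer (y + 1) k * y = pochhammer y k * (y + real k)"
proof -
  have "pochhammer y (Suc k) = y * pochhammer (y+1) k" by (rule pochhammer_rec)
  moreover have "pochhammer y (Suc k) = (y + of_nat k) * pochhammer y k" by (rule pochhammer_rec')
  ultimately show ?thesis by (simp add: algebra_simps)
qed

definition Q :: "real \<Rightarrow> nat \<Rightarrow> real" where
  "Q y k = pochhammer y k * pochhammer (y + 1/2) k"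

definition B :: "real \<Rightarrow> real \<Rightarrow> nat \<Rightarrow> real" where
  "B b1 b2 k = pochhammer b1 k * pochhammer b2 k"

definition Fc :: "real \<Rightarrow> real \<Rightarrow> real \<Rightarrow> nat \<Rightarrow> nat \<Rightarrow> real" where
  "Fc c b1 b2 n k = (-1)^k * real (n choose k) * Q ((real n + c)/2) k / B b1 b2 k"

definition Hc :: "real \<Rightarrow> real \<Rightarrow> real \<Rightarrow> nat \<Rightarrow> nat \<Rightarrow> real" where
  "Hc c b1 b2 n k = (-1)^k * real (Suc (Suc n) choose k) * Q ((real n + c)/2) k / B b1 b2 k"

lemma Q_shift1: "Q (y + 1/2) k * y = Q y k * (y + real k)"
proof -
  have "Q (y + 1/2) k * y = pochhammer (y + 1/2) k * (pochhammer (y + 1/2 + 1/2) k * y)"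
    by (simp only: Q_def mult.assoc)
  also have "y + 1/2 + 1/2 = y + 1" by simp
  also have "pochhammer (y + 1/2) k * (pochhammer (y + 1) k * y) = pochhammer (y + 1/2) k * (pochhammer y k * (y + real k))"
    by (simp only: poch_shift)
  also have "\<dots> = Q y k * (y + real k)" by (simp only: Q_def mult_ac)
  finally show ?thesis .
qed

lemma Q_shift2: "Q (y + 1) k * (y * (y + 1/2)) = Q y k * ((y + real k) * (y + 1/2 + real k))"
proof -
  have "Q (y + 1) k * (y * (y + 1/2)) = (pochhammer (y + 1) k * y) * (pochhammer (y + 1 + 1/2) k * (y + 1/2))"
    by (simp only: Q_def mult_ac)
  also have "y + 1 + 1/2 = (y + 1/2) + 1" by simp
  also have "(pochhammer (y + 1) k * y) * (pochhammer (y + 1/2 + 1) k * (y + 1/2)) = (pochhammer y k * (y + real k)) * (pochhammer (y + 1/2) k * (y + 1/2 + real k))"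
    by (simp only: poch_shift)
  also have "\<dots> = Q y k * ((y + real k) * (y + 1/2 + real k))" by (simp only: Q_def mult_ac)
  finally show ?thesis .
qed

lemma Q_Suc: "Q y (Suc k) = Q y k * ((y + real k) * (y + 1/2 + real k))"
  by (simp only: Q_def pochhammer_rec' mult_ac)

lemma B_Suc: "B b1 b2 (Suc k) = B b1 b2 k * ((b1 + real k) * (b2 + real k))"
  by (simp only: B_def pochhammer_rec' mult_ac)

lemma B_pos: "b1 > 0 \<Longrightarrow> b2 > 0 \<Longrightarrow> B b1 b2 k > 0"
  by (simp add: B_def pochhammer_pos)

lemma alg0:
  fixes s c1 c2 q bb m1 m2 :: real
  shows "s * c1 * q / bb * (m1 * m2) = s * (c1 * (m1 * m2)) * q / bb"
  by (simp add: field_simps)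

lemma R0: "Fc c b1 b2 n k * ((real n + 2) * (real n + 1)) =
  Hc c b1 b2 n k * ((real n + 2 - real k) * (real n + 1 - real k))"
  unfolding Fc_def Hc_def alg0 binom_rel0 ..

lemma alg1:
  fixes qa qb y kk ca cb m s bb :: real
  assumes "qa * y = qb * (y + kk)" "ca * m = cb * (m - kk)"
  shows "s * ca * qa / bb * (m * (2 * y)) = s * cb * qb / bb * ((m - kk) * (2 * y + 2 * kk))"
proof -
  have "s * ca * qa / bb * (m * (2 * y)) = 2 * s / bb * (ca * m) * (qa * y)" by (simp add: field_simps)
  also have "\<dots> = 2 * s / bb * (cb * (m - kk)) * (qb * (y + kk))" by (simp only: assms)
  also have "\<dots> = s * cb * qb / bb * ((m - kk) * (2 * y + 2 * kk))" by (simp add: field_simps)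
  finally show ?thesis .
qed

lemma R1: "Fc c b1 b2 (Suc n) k * ((real n + 2) * (real n + c)) =
  Hc c b1 b2 n k * ((real n + 2 - real k) * (real n + c + 2 * real k))"
proof -
  define y where "y = (real n + c) / 2"
  have yy: "(real (Suc n) + c) / 2 = y + 1/2" by (simp add: y_def field_simps)
  have nc: "real n + c = 2 * y" by (simp add: y_def)
  have e1: "Fc c b1 b2 (Suc n) k = (-1)^k * real (Suc n choose k) * Q (y + 1/2) k / B b1 b2 k"
    by (simp only: Fc_def yy)
  have e2: "Hc c b1 b2 n k = (-1)^k * real (Suc (Suc n) choose k) * Q y k / B b1 b2 k"
    by (simp only: Hc_def y_def)
  have e3: "real n + c + 2 * real k = 2 * y + 2 * real k" by (simp add: nc)
  show ?thesis unfolding e1 e2 e3 nc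
    by (rule alg1[OF Q_shift1[of y k] binom_rel1[of n k]])
qed

lemma alg2:
  fixes qa qb y kk cb s bb :: real
  assumes "qa * (y * (y + 1/2)) = qb * ((y + kk) * (y + 1/2 + kk))"
  shows "s * cb * qa / bb * ((2 * y) * (2 * y + 1)) = s * cb * qb / bb * ((2 * y + 2 * kk) * (2 * y + 2 * kk + 1))"
proof -
  have "s * cb * qa / bb * ((2 * y) * (2 * y + 1)) = 4 * s * cb / bb * (qa * (y * (y + 1/2)))"
    by (cases "bb = 0") (simp_all add: field_simps)
  also have "\<dots> = 4 * s * cb / bb * (qb * ((y + kk) * (y + 1/2 + kk)))" by (simp only: assms)
  also have "\<dots> = s * cb * qb / bb * ((2 * y + 2 * kk) * (2 * y + 2 * kk + 1))"
    by (cases "bb = 0") (simp_all add: field_simps)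
  finally show ?thesis .
qed

lemma R2: "Fc c b1 b2 (Suc (Suc n)) k * ((real n + c) * (real n + c + 1)) =
  Hc c b1 b2 n k * ((real n + c + 2 * real k) * (real n + c + 2 * real k + 1))"
proof -
  define y where "y = (real n + c) / 2"
  have yy: "(real (Suc (Suc n)) + c) / 2 = y + 1" by (simp add: y_def field_simps)
  have nc: "real n + c = 2 * y" by (simp add: y_def)
  have e1: "Fc c b1 b2 (Suc (Suc n)) k = (-1)^k * real (Suc (Suc n) choose k) * Q (y + 1) k / B b1 b2 k"
    by (simp only: Fc_def yy)
  have e2: "Hc c b1 b2 n k = (-1)^k * real (Suc (Suc n) choose k) * Q y k / B b1 b2 k"
    by (simp only: Hc_def y_def)
  have e3: "real n + c + 2 * real k = 2 * y + 2 * real k" by (simp add: nc)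
  show ?thesis unfolding e1 e2 e3 nc
    by (rule alg2[OF Q_shift2[of y k]])
qed

lemma alg3:
  fixes qb y kk ca cb m s bb D Y :: real
  assumes "ca * (kk + 1) = cb * (m - kk)" "bb \<noteq> 0" "D \<noteq> 0"
    and "4 * Y = (2 * y + 2 * kk) * (2 * y + 2 * kk + 1)"
  shows "(- s) * ca * (qb * Y) / (bb * D) * (4 * (kk + 1) * D)
     = - (s * cb * qb / bb) * ((m - kk) * (2 * y + 2 * kk) * (2 * y + 2 * kk + 1))"
proof -
  have "(- s) * ca * (qb * Y) / (bb * D) * (4 * (kk + 1) * D)
     = - s * qb * (4 * Y) / bb * (ca * (kk + 1))" using assms(2,3) by (simp add: field_simps)
  also have "\<dots> = - s * qb * ((2 * y + 2 * kk) * (2 * y + 2 * kk + 1)) / bb * (cb * (m - kk))"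
    by (simp only: assms(1,4))
  also have "\<dots> = - (s * cb * qb / bb) * ((m - kk) * (2 * y + 2 * kk) * (2 * y + 2 * kk + 1))"
    using assms(2) by (simp add: field_simps)
  finally show ?thesis .
qed

lemma RS:
  assumes "b1 > 0" "b2 > 0"
  shows "Hc c b1 b2 n (Suc k) * (4 * (real k + 1) * (b1 + real k) * (b2 + real k)) =
    - Hc c b1 b2 n k * ((real n + 2 - real k) * (real n + c + 2 * real k) * (real n + c + 2 * real k + 1))"
proof -
  define y where "y = (real n + c) / 2"
  have nc: "real n + c = 2 * y" by (simp add: y_def)
  have bk: "b1 + real k \<noteq> 0" "b2 + real k \<noteq> 0" using assms by auto
  have Bp: "B b1 b2 k \<noteq> 0" using B_pos assms by (metis less_irrefl)
  have e1: "Hc c b1 b2 n (Suc k) = (- ((-1)^k)) * real (Suc (Suc n) choose Suc k) * (Q y k * ((y + real k) * (y + 1/2 + real k))) / (B b1 b2 k * ((b1 + real k) * (b2 + real k)))"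
    by (simp only: Hc_def y_def[symmetric] Q_Suc B_Suc power_Suc mult_minus1)
  have e2: "Hc c b1 b2 n k = (-1)^k * real (Suc (Suc n) choose k) * Q y k / B b1 b2 k"
    by (simp only: Hc_def y_def)
  have e3: "real n + c + 2 * real k = 2 * y + 2 * real k" by (simp add: nc)
  have bi: "real (Suc (Suc n) choose Suc k) * (real k + 1) = real (Suc (Suc n) choose k) * ((real n + 2) - real k)"
    using binom_relS[of "Suc (Suc n)" k] by simp
  have m: "4 * (real k + 1) * (b1 + real k) * (b2 + real k) = 4 * (real k + 1) * ((b1 + real k) * (b2 + real k))"
    by (simp only: mult.assoc)
  have D: "(b1 + real k) * (b2 + real k) \<noteq> 0" using bk by simp
  show ?thesis unfolding e1 e2 e3 m
    by (rule alg3[OF bi Bp D]) (simp add: algebra_simps)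
qed

lemma abs_tel:
  fixes F0 F1 F2 H1 h D0 D1 D2 D3 X e0 e1 e2 e3 a0 a1 a2 p0 p1 :: real
  assumes r: "F0 * D0 = h * e0" "F1 * D1 = h * e1" "F2 * D2 = h * e2" "H1 * D3 = - h * e3"
    and dx: "D1 * X = D0 * D2"
    and poly: "a0 * e0 * D2 * D3 + a1 * e1 * X * D3 + a2 * e2 * D0 * D3 + e3 * p1 * D0 * D2 + p0 * D0 * D2 * D3 = 0"
    and nz: "D0 \<noteq> 0" "D2 \<noteq> 0" "D3 \<noteq> 0"
  shows "a0 * F0 + a1 * F1 + a2 * F2 = H1 * p1 - h * p0"
proof -
  have "(D0 * D2 * D3) * (a0 * F0 + a1 * F1 + a2 * F2 - (H1 * p1 - h * p0))
     = a0 * (F0 * D0) * D2 * D3 + a1 * F1 * (D0 * D2) * D3 + a2 * (F2 * D2) * D0 * D3 - p1 * (H1 * D3) * D0 * D2 + p0 * h * D0 * D2 * D3"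
    by (simp add: algebra_simps)
  also have "\<dots> = a0 * (F0 * D0) * D2 * D3 + a1 * (F1 * D1) * X * D3 + a2 * (F2 * D2) * D0 * D3 - p1 * (H1 * D3) * D0 * D2 + p0 * h * D0 * D2 * D3"
    by (simp only: dx[symmetric] mult_ac)
  also have "\<dots> = h * (a0 * e0 * D2 * D3 + a1 * e1 * X * D3 + a2 * e2 * D0 * D3 + e3 * p1 * D0 * D2 + p0 * D0 * D2 * D3)"
    unfolding r by (simp add: algebra_simps)
  also have "\<dots> = 0" unfolding poly by simp
  finally show ?thesis using nz by simp
qed

lemma pointwise:
  fixes c b1 b2 a0 a1 a2 p0 p1 :: real
  assumes b: "b1 > 0" "b2 > 0" and nz: "real n + c \<noteq> 0" "real n + c + 1 \<noteq> 0"
  and poly: "a0 * ((real n + 2 - real k) * (real n + 1 - real k)) * ((real n + c) * (real n + c + 1)) * (4 * (real k + 1) * (b1 + real k) * (b2 + real k))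
    + a1 * ((real n + 2 - real k) * (real n + c + 2 * real k)) * ((real n + 1) * (real n + c + 1)) * (4 * (real k + 1) * (b1 + real k) * (b2 + real k))
    + a2 * ((real n + c + 2 * real k) * (real n + c + 2 * real k + 1)) * ((real n + 2) * (real n + 1)) * (4 * (real k + 1) * (b1 + real k) * (b2 + real k))
    + ((real n + 2 - real k) * (real n + c + 2 * real k) * (real n + c + 2 * real k + 1)) * p1 * ((real n + 2) * (real n + 1)) * ((real n + c) * (real n + c + 1))
    + p0 * ((real n + 2) * (real n + 1)) * ((real n + c) * (real n + c + 1)) * (4 * (real k + 1) * (b1 + real k) * (b2 + real k)) = 0"
  shows "a0 * Fc c b1 b2 n k + a1 * Fc c b1 b2 (Suc n) k + a2 * Fc c b1 b2 (Suc (Suc n)) k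
     = Hc c b1 b2 n (Suc k) * p1 - Hc c b1 b2 n k * p0"
proof (rule abs_tel[OF R0 R1 R2 RS[OF b] _ poly])
  show "(real n + 2) * (real n + c) * ((real n + 1) * (real n + c + 1)) = (real n + 2) * (real n + 1) * ((real n + c) * (real n + c + 1))"
    by (simp only: mult_ac)
  show "(real n + 2) * (real n + 1) \<noteq> 0" by simp
  show "(real n + c) * (real n + c + 1) \<noteq> 0" using nz by simp
  show "4 * (real k + 1) * (b1 + real k) * (b2 + real k) \<noteq> 0" using b by (simp add: add_pos_nonneg)
qed

definition S :: "real \<Rightarrow> real \<Rightarrow> real \<Rightarrow> nat \<Rightarrow> real" where
  "S c b1 b2 m = (\<Sum>k\<le>m. Fc c b1 b2 m k)"

lemma Fc_zero: "m < k \<Longrightarrow> Fc c b1 b2 m k = 0"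
  by (simp add: Fc_def)

lemma Hc_zero: "Suc (Suc n) < k \<Longrightarrow> Hc c b1 b2 n k = 0"
  by (simp add: Hc_def)

lemma S_ext: "m \<le> M \<Longrightarrow> S c b1 b2 m = (\<Sum>k<Suc M. Fc c b1 b2 m k)"
  unfolding S_def
  by (rule sum.mono_neutral_left) (auto simp: Fc_zero)

lemma recur:
  fixes a0 a1 a2 :: real and p :: "real \<Rightarrow> real"
  assumes pw: "\<And>k. a0 * Fc c b1 b2 n k + a1 * Fc c b1 b2 (Suc n) k + a2 * Fc c b1 b2 (Suc (Suc n)) k
     = Hc c b1 b2 n (Suc k) * p (real (Suc k)) - Hc c b1 b2 n k * p (real k)"
    and p0: "p 0 = 0"
  shows "a0 * S c b1 b2 n + a1 * S c b1 b2 (Suc n) + a2 * S c b1 b2 (Suc (Suc n)) = 0"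
proof -
  let ?M = "Suc (Suc n)"
  let ?g = "\<lambda>k. Hc c b1 b2 n k * p (real k)"
  have "a0 * S c b1 b2 n + a1 * S c b1 b2 (Suc n) + a2 * S c b1 b2 (Suc (Suc n))
     = (\<Sum>k<Suc ?M. a0 * Fc c b1 b2 n k + a1 * Fc c b1 b2 (Suc n) k + a2 * Fc c b1 b2 (Suc (Suc n)) k)"
  proof -
    have e: "S c b1 b2 n = (\<Sum>k<Suc ?M. Fc c b1 b2 n k)"
      "S c b1 b2 (Suc n) = (\<Sum>k<Suc ?M. Fc c b1 b2 (Suc n) k)"
      "S c b1 b2 (Suc (Suc n)) = (\<Sum>k<Suc ?M. Fc c b1 b2 (Suc (Suc n)) k)"
      by (intro S_ext; simp)+
    show ?thesis unfolding e by (simp only: sum.distrib sum_distrib_left)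
  qed
  also have "\<dots> = (\<Sum>k<Suc ?M. ?g (Suc k) - ?g k)"
    by (simp only: pw)
  also have "\<dots> = ?g (Suc ?M) - ?g 0"
    by (rule sum_lessThan_telescope)
  also have "\<dots> = 0" by (simp add: Hc_zero p0)
  finally show ?thesis .
qed

lemma rec_uniq:
  fixes S T Aa Ab Ac :: "nat \<Rightarrow> real"
  assumes rS: "\<And>n. n \<ge> 1 \<Longrightarrow> Aa n * S n + Ab n * S (Suc n) + Ac n * S (Suc (Suc n)) = 0"
    and rT: "\<And>n. n \<ge> 1 \<Longrightarrow> Aa n * T n + Ab n * T (Suc n) + Ac n * T (Suc (Suc n)) = 0"
    and nz: "\<And>n. n \<ge> 1 \<Longrightarrow> Ac n \<noteq> 0"
    and i1: "S 1 = T 1" and i2: "S 2 = T 2"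
    and n: "n \<ge> 1"
  shows "S n = T n"
proof -
  have "S (Suc m) = T (Suc m) \<and> S (Suc (Suc m)) = T (Suc (Suc m))" for m
  proof (induction m)
    case 0
    then show ?case using i1 i2 by (simp add: numeral_2_eq_2)
  next
    case (Suc m)
    have a: "Aa (Suc m) * S (Suc m) + Ab (Suc m) * S (Suc (Suc m)) + Ac (Suc m) * S (Suc (Suc (Suc m))) = 0"
      using rS[of "Suc m"] by simp
    have b: "Aa (Suc m) * T (Suc m) + Ab (Suc m) * T (Suc (Suc m)) + Ac (Suc m) * T (Suc (Suc (Suc m))) = 0"
      using rT[of "Suc m"] by simp
    have "Ac (Suc m) * S (Suc (Suc (Suc m))) = - (Aa (Suc m) * S (Suc m) + Ab (Suc m) * S (Suc (Suc m)))"
      using a by linarith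
    also have "\<dots> = - (Aa (Suc m) * T (Suc m) + Ab (Suc m) * T (Suc (Suc m)))"
      using Suc.IH by simp
    also have "\<dots> = Ac (Suc m) * T (Suc (Suc (Suc m)))"
      using b by linarith
    finally have "Ac (Suc m) * S (Suc (Suc (Suc m))) = Ac (Suc m) * T (Suc (Suc (Suc m)))" .
    then have "S (Suc (Suc (Suc m))) = T (Suc (Suc (Suc m)))" using nz[of "Suc m"] by simp
    then show ?case using Suc.IH by simp
  qed
  moreover obtain m where "n = Suc m" using n by (cases n) auto
  ultimately show ?thesis by blast
qed

lemma abs_rec:
  fixes t0 t1 t2 d0 d1 d2 xa xb xc a0 a1 a2 :: real
  assumes "t0 * d0 = xa" "t1 * d1 = xb" "t2 * d2 = xc"
    "a0 * xa * d1 * d2 + a1 * xb * d0 * d2 + a2 * xc * d0 * d1 = 0"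
    "d0 \<noteq> 0" "d1 \<noteq> 0" "d2 \<noteq> 0"
  shows "a0 * t0 + a1 * t1 + a2 * t2 = 0"
proof -
  have "(d0 * d1 * d2) * (a0 * t0 + a1 * t1 + a2 * t2) = a0 * (t0 * d0) * d1 * d2 + a1 * (t1 * d1) * d0 * d2 + a2 * (t2 * d2) * d0 * d1"
    by (simp add: algebra_simps)
  also have "\<dots> = 0" using assms(1-4) by simp
  finally show ?thesis using assms(5-7) by simp
qed

lemma poch_neg: "pochhammer (- real n) k / fact k = (-1)^k * real (n choose k)"
proof -
  have "real (n choose k) = (-1)^k * pochhammer (- real n) k / fact k"
    using gbinomial_pochhammer[of "real n" k] by (simp add: binomial_gbinomial)
  then have "(-1)^k * real (n choose k) = ((-1)^k * (-1)^k) * pochhammer (- real n) k / fact k"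
    by simp
  also have "(-1)^k * (-1)^k = (1::real)" by (simp add: power_mult_distrib[symmetric])
  finally show ?thesis by simp
qed

lemma conv_term:
  "pochhammer (- real n) k * pochhammer a2 k * pochhammer a3 k / (pochhammer b1 k * pochhammer b2 k) * 1 ^ k / fact k
   = (-1)^k * real (n choose k) * (pochhammer a2 k * pochhammer a3 k) / (pochhammer b1 k * pochhammer b2 k)"
proof -
  have "pochhammer (- real n) k * pochhammer a2 k * pochhammer a3 k / (pochhammer b1 k * pochhammer b2 k) * 1 ^ k / fact k
    = (pochhammer (- real n) k / fact k) * (pochhammer a2 k * pochhammer a3 k) / (pochhammer b1 k * pochhammer b2 k)"
    by (simp add: mult_ac)
  then show ?thesis unfolding poch_neg .
qed

lemma convA:
  assumes "a2 = (real n + c) / 2 + 1/2" "a3 = (real n + c) / 2"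
  shows "hyp3F2_term n a2 a3 b1 b2 1 = S c b1 b2 n"
  unfolding hyp3F2_term_def S_def Fc_def Q_def B_def conv_term assms
  by (simp only: mult.commute[of "pochhammer ((real n + c) / 2 + 1 / 2) _"])

lemma convB:
  assumes "a2 = (real n + c) / 2" "a3 = (real n + c) / 2 + 1/2"
  shows "hyp3F2_term n a2 a3 b1 b2 1 = S c b1 b2 n"
  unfolding hyp3F2_term_def S_def Fc_def Q_def B_def conv_term assms ..

definition p1 :: "real \<Rightarrow> real" where "p1 x = ((24) * x + (-108) * x ^ 2 + (108) * x ^ 3)"

lemma poly1: fixes N K :: real shows
 "((12) * N + (18) * N ^ 2 + (6) * N ^ 3) * ((N + 2 - K) * (N + 1 - K)) * ((N + 0) * (N + 0 + 1)) * (4 * (K + 1) * (1/3 + K) * (2/3 + K))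
    + ((-42) * N + (-63) * N ^ 2 + (-21) * N ^ 3) * ((N + 2 - K) * (N + 0 + 2 * K)) * ((N + 1) * (N + 0 + 1)) * (4 * (K + 1) * (1/3 + K) * (2/3 + K))
    + ((-24) * N + (-36) * N ^ 2 + (-12) * N ^ 3) * ((N + 0 + 2 * K) * (N + 0 + 2 * K + 1)) * ((N + 2) * (N + 1)) * (4 * (K + 1) * (1/3 + K) * (2/3 + K))
    + ((N + 2 - K) * (N + 0 + 2 * K) * (N + 0 + 2 * K + 1)) * p1 (1 + K) * ((N + 2) * (N + 1)) * ((N + 0) * (N + 0 + 1))
    + p1 (K) * ((N + 2) * (N + 1)) * ((N + 0) * (N + 0 + 1)) * (4 * (K + 1) * (1/3 + K) * (2/3 + K)) = 0"
  unfolding p1_def by algebra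

lemma pw1: assumes "n \<ge> 1" shows
  "((12) * real n + (18) * real n ^ 2 + (6) * real n ^ 3) * Fc 0 (1/3) (2/3) n k + ((-42) * real n + (-63) * real n ^ 2 + (-21) * real n ^ 3) * Fc 0 (1/3) (2/3) (Suc n) k + ((-24) * real n + (-36) * real n ^ 2 + (-12) * real n ^ 3) * Fc 0 (1/3) (2/3) (Suc (Suc n)) k
     = Hc 0 (1/3) (2/3) n (Suc k) * p1 (real (Suc k)) - Hc 0 (1/3) (2/3) n k * p1 (real k)"
proof (rule pointwise)
  show "real n + 0 \<noteq> 0" "real n + 0 + 1 \<noteq> 0" using assms by simp_all
  show "((12) * real n + (18) * real n ^ 2 + (6) * real n ^ 3) * ((real n + 2 - real k) * (real n + 1 - real k)) * ((real n + 0) * (real n + 0 + 1)) * (4 * (real k + 1) * (1/3 + real k) * (2/3 + real k))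
    + ((-42) * real n + (-63) * real n ^ 2 + (-21) * real n ^ 3) * ((real n + 2 - real k) * (real n + 0 + 2 * real k)) * ((real n + 1) * (real n + 0 + 1)) * (4 * (real k + 1) * (1/3 + real k) * (2/3 + real k))
    + ((-24) * real n + (-36) * real n ^ 2 + (-12) * real n ^ 3) * ((real n + 0 + 2 * real k) * (real n + 0 + 2 * real k + 1)) * ((real n + 2) * (real n + 1)) * (4 * (real k + 1) * (1/3 + real k) * (2/3 + real k))
    + ((real n + 2 - real k) * (real n + 0 + 2 * real k) * (real n + 0 + 2 * real k + 1)) * p1 (real (Suc k)) * ((real n + 2) * (real n + 1)) * ((real n + 0) * (real n + 0 + 1))
    + p1 (real k) * ((real n + 2) * (real n + 1)) * ((real n + 0) * (real n + 0 + 1)) * (4 * (real k + 1) * (1/3 + real k) * (2/3 + real k)) = 0"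
    using poly1[of "real n" "real k"] unfolding of_nat_Suc .
qed simp_all

lemma rec1: assumes "n \<ge> 1" shows
  "((12) * real n + (18) * real n ^ 2 + (6) * real n ^ 3) * S 0 (1/3) (2/3) n + ((-42) * real n + (-63) * real n ^ 2 + (-21) * real n ^ 3) * S 0 (1/3) (2/3) (Suc n) + ((-24) * real n + (-36) * real n ^ 2 + (-12) * real n ^ 3) * S 0 (1/3) (2/3) (Suc (Suc n)) = 0"
  by (rule recur[OF pw1[OF assms]]) (simp add: p1_def)

definition T1 :: "nat \<Rightarrow> real" where "T1 n = (1 + 2 * (-8) ^ n) / (3 * 4 ^ n)"

lemma Trec1: "((12) * real n + (18) * real n ^ 2 + (6) * real n ^ 3) * T1 n + ((-42) * real n + (-63) * real n ^ 2 + (-21) * real n ^ 3) * T1 (Suc n) + ((-24) * real n + (-36) * real n ^ 2 + (-12) * real n ^ 3) * T1 (Suc (Suc n)) = 0"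
proof -
  define u :: real where "u = (-8)^n"
  define v :: real where "v = 4^n"
  define N where "N = real n"
  have v: "v > 0" unfolding v_def by simp
  have N: "N \<ge> 0" unfolding N_def by simp
  have e: "T1 n = (1 + 2 * u) / (3 * v)"
     "T1 (Suc n) = (1 + 2 * ((-8) * u)) / (3 * (4 * v))"
     "T1 (Suc (Suc n)) = (1 + 2 * (64 * u)) / (3 * (16 * v))"
    by (simp_all add: T1_def u_def v_def N_def power_Suc algebra_simps)
  have nz: "(3 * v) \<noteq> 0" "(3 * (4 * v)) \<noteq> 0" "(3 * (16 * v)) \<noteq> 0"
    using v N by (auto simp: add_nonneg_eq_0_iff)
  show ?thesis unfolding e N_def[symmetric]
    apply (rule abs_rec[where xa = "(1 + 2 * u)" and xb = "(1 + 2 * ((-8) * u))" and xc = "(1 + 2 * (64 * u))", OF _ _ _ _ nz])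
    subgoal using nz by simp
    subgoal using nz by simp
    subgoal using nz by simp
    subgoal by algebra
    done
qed

lemma S1: assumes "n \<ge> 1" shows "S 0 (1/3) (2/3) n = T1 n"
proof (rule rec_uniq[where S = "S 0 (1/3) (2/3)" and T = T1 and Aa = "\<lambda>n. ((12) * real n + (18) * real n ^ 2 + (6) * real n ^ 3)" and Ab = "\<lambda>n. ((-42) * real n + (-63) * real n ^ 2 + (-21) * real n ^ 3)" and Ac = "\<lambda>n. ((-24) * real n + (-36) * real n ^ 2 + (-12) * real n ^ 3)"])
  show "\<And>n. n \<ge> 1 \<Longrightarrow> (\<lambda>n. ((12) * real n + (18) * real n ^ 2 + (6) * real n ^ 3)) n * S 0 (1/3) (2/3) n + (\<lambda>n. ((-42) * real n + (-63) * real n ^ 2 + (-21) * real n ^ 3)) n * S 0 (1/3) (2/3) (Suc n) + (\<lambda>n. ((-24) * real n + (-36) * real n ^ 2 + (-12) * real n ^ 3)) n * S 0 (1/3) (2/3) (Suc (Suc n)) = 0"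
    using rec1 by simp
  show "\<And>n. n \<ge> 1 \<Longrightarrow> (\<lambda>n. ((12) * real n + (18) * real n ^ 2 + (6) * real n ^ 3)) n * T1 n + (\<lambda>n. ((-42) * real n + (-63) * real n ^ 2 + (-21) * real n ^ 3)) n * T1 (Suc n) + (\<lambda>n. ((-24) * real n + (-36) * real n ^ 2 + (-12) * real n ^ 3)) n * T1 (Suc (Suc n)) = 0"
    using Trec1 by simp
  show "\<And>n. n \<ge> 1 \<Longrightarrow> (\<lambda>n. ((-24) * real n + (-36) * real n ^ 2 + (-12) * real n ^ 3)) n \<noteq> 0"
  proof -
    fix n :: nat assume "n \<ge> 1"
    then have p: "real n > 0" by simp
    have "0 < ((24) * real n + (36) * real n ^ 2 + (12) * real n ^ 3)" using p by (intro add_pos_pos mult_pos_pos zero_less_power) auto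
    then show "(\<lambda>n. ((-24) * real n + (-36) * real n ^ 2 + (-12) * real n ^ 3)) n \<noteq> 0" by simp
  qed
  show "S 0 (1/3) (2/3) 1 = T1 1"
    by (simp add: S_def Fc_def Q_def B_def T1_def)
  show "S 0 (1/3) (2/3) 2 = T1 2"
    by (simp add: S_def Fc_def Q_def B_def T1_def numeral_2_eq_2 atMost_Suc pochhammer_rec')
qed (rule assms)

lemma final1: assumes "n \<ge> 1" shows "hyp3F2_term n ((real n + 1) / 2) (real n / 2) (1/3) (2/3) 1 = (1 + 2 * (-8) ^ n) / (3 * 4 ^ n)"
proof -
  have "hyp3F2_term n ((real n + 1) / 2) (real n / 2) (1/3) (2/3) 1 = S 0 (1/3) (2/3) n"
    by (rule convA) (simp_all add: field_simps)
  also have "\<dots> = T1 n" by (rule S1[OF assms])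
  finally show ?thesis by (simp add: T1_def)
qed

definition p2 :: "real \<Rightarrow> real" where "p2 x = ((-12) * x + (108) * x ^ 3)"

lemma poly2: fixes N K :: real shows
 "((4) + (18) * N + (20) * N ^ 2 + (6) * N ^ 3) * ((N + 2 - K) * (N + 1 - K)) * ((N + 1) * (N + 1 + 1)) * (4 * (K + 1) * (2/3 + K) * (4/3 + K))
    + ((-56) + (-126) * N + (-91) * N ^ 2 + (-21) * N ^ 3) * ((N + 2 - K) * (N + 1 + 2 * K)) * ((N + 1) * (N + 1 + 1)) * (4 * (K + 1) * (2/3 + K) * (4/3 + K))
    + ((-56) + (-108) * N + (-64) * N ^ 2 + (-12) * N ^ 3) * ((N + 1 + 2 * K) * (N + 1 + 2 * K + 1)) * ((N + 2) * (N + 1)) * (4 * (K + 1) * (2/3 + K) * (4/3 + K))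
    + ((N + 2 - K) * (N + 1 + 2 * K) * (N + 1 + 2 * K + 1)) * p2 (1 + K) * ((N + 2) * (N + 1)) * ((N + 1) * (N + 1 + 1))
    + p2 (K) * ((N + 2) * (N + 1)) * ((N + 1) * (N + 1 + 1)) * (4 * (K + 1) * (2/3 + K) * (4/3 + K)) = 0"
  unfolding p2_def by algebra

lemma pw2: assumes "n \<ge> 1" shows
  "((4) + (18) * real n + (20) * real n ^ 2 + (6) * real n ^ 3) * Fc 1 (2/3) (4/3) n k + ((-56) + (-126) * real n + (-91) * real n ^ 2 + (-21) * real n ^ 3) * Fc 1 (2/3) (4/3) (Suc n) k + ((-56) + (-108) * real n + (-64) * real n ^ 2 + (-12) * real n ^ 3) * Fc 1 (2/3) (4/3) (Suc (Suc n)) k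
     = Hc 1 (2/3) (4/3) n (Suc k) * p2 (real (Suc k)) - Hc 1 (2/3) (4/3) n k * p2 (real k)"
proof (rule pointwise)
  show "real n + 1 \<noteq> 0" "real n + 1 + 1 \<noteq> 0" using assms by simp_all
  show "((4) + (18) * real n + (20) * real n ^ 2 + (6) * real n ^ 3) * ((real n + 2 - real k) * (real n + 1 - real k)) * ((real n + 1) * (real n + 1 + 1)) * (4 * (real k + 1) * (2/3 + real k) * (4/3 + real k))
    + ((-56) + (-126) * real n + (-91) * real n ^ 2 + (-21) * real n ^ 3) * ((real n + 2 - real k) * (real n + 1 + 2 * real k)) * ((real n + 1) * (real n + 1 + 1)) * (4 * (real k + 1) * (2/3 + real k) * (4/3 + real k))
    + ((-56) + (-108) * real n + (-64) * real n ^ 2 + (-12) * real n ^ 3) * ((real n + 1 + 2 * real k) * (real n + 1 + 2 * real k + 1)) * ((real n + 2) * (real n + 1)) * (4 * (real k + 1) * (2/3 + real k) * (4/3 + real k))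
    + ((real n + 2 - real k) * (real n + 1 + 2 * real k) * (real n + 1 + 2 * real k + 1)) * p2 (real (Suc k)) * ((real n + 2) * (real n + 1)) * ((real n + 1) * (real n + 1 + 1))
    + p2 (real k) * ((real n + 2) * (real n + 1)) * ((real n + 1) * (real n + 1 + 1)) * (4 * (real k + 1) * (2/3 + real k) * (4/3 + real k)) = 0"
    using poly2[of "real n" "real k"] unfolding of_nat_Suc .
qed simp_all

lemma rec2: assumes "n \<ge> 1" shows
  "((4) + (18) * real n + (20) * real n ^ 2 + (6) * real n ^ 3) * S 1 (2/3) (4/3) n + ((-56) + (-126) * real n + (-91) * real n ^ 2 + (-21) * real n ^ 3) * S 1 (2/3) (4/3) (Suc n) + ((-56) + (-108) * real n + (-64) * real n ^ 2 + (-12) * real n ^ 3) * S 1 (2/3) (4/3) (Suc (Suc n)) = 0"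
  by (rule recur[OF pw2[OF assms]]) (simp add: p2_def)

definition T2 :: "nat \<Rightarrow> real" where "T2 n = (4 * (-8) ^ n - 1) / (3 * (3 * real n + 1) * 4 ^ n)"

lemma Trec2: "((4) + (18) * real n + (20) * real n ^ 2 + (6) * real n ^ 3) * T2 n + ((-56) + (-126) * real n + (-91) * real n ^ 2 + (-21) * real n ^ 3) * T2 (Suc n) + ((-56) + (-108) * real n + (-64) * real n ^ 2 + (-12) * real n ^ 3) * T2 (Suc (Suc n)) = 0"
proof -
  define u :: real where "u = (-8)^n"
  define v :: real where "v = 4^n"
  define N where "N = real n"
  have v: "v > 0" unfolding v_def by simp
  have N: "N \<ge> 0" unfolding N_def by simp
  have e: "T2 n = (4 * u - 1) / (3 * (3 * N + 1) * v)"
     "T2 (Suc n) = (4 * ((-8) * u) - 1) / (3 * (3 * (N + 1) + 1) * (4 * v))"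
     "T2 (Suc (Suc n)) = (4 * (64 * u) - 1) / (3 * (3 * (N + 2) + 1) * (16 * v))"
    by (simp_all add: T2_def u_def v_def N_def power_Suc algebra_simps)
  have nz: "(3 * (3 * N + 1) * v) \<noteq> 0" "(3 * (3 * (N + 1) + 1) * (4 * v)) \<noteq> 0" "(3 * (3 * (N + 2) + 1) * (16 * v)) \<noteq> 0"
    using v N by (auto simp: add_nonneg_eq_0_iff)
  show ?thesis unfolding e N_def[symmetric]
    apply (rule abs_rec[where xa = "(4 * u - 1)" and xb = "(4 * ((-8) * u) - 1)" and xc = "(4 * (64 * u) - 1)", OF _ _ _ _ nz])
    subgoal using nz by simp
    subgoal using nz by simp
    subgoal using nz by simp
    subgoal by algebra
    done
qed

lemma S2: assumes "n \<ge> 1" shows "S 1 (2/3) (4/3) n = T2 n"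
proof (rule rec_uniq[where S = "S 1 (2/3) (4/3)" and T = T2 and Aa = "\<lambda>n. ((4) + (18) * real n + (20) * real n ^ 2 + (6) * real n ^ 3)" and Ab = "\<lambda>n. ((-56) + (-126) * real n + (-91) * real n ^ 2 + (-21) * real n ^ 3)" and Ac = "\<lambda>n. ((-56) + (-108) * real n + (-64) * real n ^ 2 + (-12) * real n ^ 3)"])
  show "\<And>n. n \<ge> 1 \<Longrightarrow> (\<lambda>n. ((4) + (18) * real n + (20) * real n ^ 2 + (6) * real n ^ 3)) n * S 1 (2/3) (4/3) n + (\<lambda>n. ((-56) + (-126) * real n + (-91) * real n ^ 2 + (-21) * real n ^ 3)) n * S 1 (2/3) (4/3) (Suc n) + (\<lambda>n. ((-56) + (-108) * real n + (-64) * real n ^ 2 + (-12) * real n ^ 3)) n * S 1 (2/3) (4/3) (Suc (Suc n)) = 0"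
    using rec2 by simp
  show "\<And>n. n \<ge> 1 \<Longrightarrow> (\<lambda>n. ((4) + (18) * real n + (20) * real n ^ 2 + (6) * real n ^ 3)) n * T2 n + (\<lambda>n. ((-56) + (-126) * real n + (-91) * real n ^ 2 + (-21) * real n ^ 3)) n * T2 (Suc n) + (\<lambda>n. ((-56) + (-108) * real n + (-64) * real n ^ 2 + (-12) * real n ^ 3)) n * T2 (Suc (Suc n)) = 0"
    using Trec2 by simp
  show "\<And>n. n \<ge> 1 \<Longrightarrow> (\<lambda>n. ((-56) + (-108) * real n + (-64) * real n ^ 2 + (-12) * real n ^ 3)) n \<noteq> 0"
  proof -
    fix n :: nat assume "n \<ge> 1"
    then have p: "real n > 0" by simp
    have "0 < ((56) + (108) * real n + (64) * real n ^ 2 + (12) * real n ^ 3)" using p by (intro add_pos_pos mult_pos_pos zero_less_power) auto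
    then show "(\<lambda>n. ((-56) + (-108) * real n + (-64) * real n ^ 2 + (-12) * real n ^ 3)) n \<noteq> 0" by simp
  qed
  show "S 1 (2/3) (4/3) 1 = T2 1"
    by (simp add: S_def Fc_def Q_def B_def T2_def)
  show "S 1 (2/3) (4/3) 2 = T2 2"
    by (simp add: S_def Fc_def Q_def B_def T2_def numeral_2_eq_2 atMost_Suc pochhammer_rec')
qed (rule assms)

lemma final2: assumes "n \<ge> 1" shows "hyp3F2_term n ((real n + 1) / 2) ((real n + 2) / 2) (2/3) (4/3) 1 = (4 * (-8) ^ n - 1) / (3 * (3 * real n + 1) * 4 ^ n)"
proof -
  have "hyp3F2_term n ((real n + 1) / 2) ((real n + 2) / 2) (2/3) (4/3) 1 = S 1 (2/3) (4/3) n"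
    by (rule convB) (simp_all add: field_simps)
  also have "\<dots> = T2 n" by (rule S2[OF assms])
  finally show ?thesis by (simp add: T2_def)
qed

definition p3 :: "real \<Rightarrow> real" where "p3 x = ((24) * x + (108) * x ^ 2 + (108) * x ^ 3)"

lemma poly3: fixes N K :: real shows
 "((8) + (24) * N + (22) * N ^ 2 + (6) * N ^ 3) * ((N + 2 - K) * (N + 1 - K)) * ((N + 2) * (N + 2 + 1)) * (4 * (K + 1) * (4/3 + K) * (5/3 + K))
    + ((-140) + (-224) * N + (-119) * N ^ 2 + (-21) * N ^ 3) * ((N + 2 - K) * (N + 2 + 2 * K)) * ((N + 1) * (N + 2 + 1)) * (4 * (K + 1) * (4/3 + K) * (5/3 + K))
    + ((-192) + (-232) * N + (-92) * N ^ 2 + (-12) * N ^ 3) * ((N + 2 + 2 * K) * (N + 2 + 2 * K + 1)) * ((N + 2) * (N + 1)) * (4 * (K + 1) * (4/3 + K) * (5/3 + K))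
    + ((N + 2 - K) * (N + 2 + 2 * K) * (N + 2 + 2 * K + 1)) * p3 (1 + K) * ((N + 2) * (N + 1)) * ((N + 2) * (N + 2 + 1))
    + p3 (K) * ((N + 2) * (N + 1)) * ((N + 2) * (N + 2 + 1)) * (4 * (K + 1) * (4/3 + K) * (5/3 + K)) = 0"
  unfolding p3_def by algebra

lemma pw3: assumes "n \<ge> 1" shows
  "((8) + (24) * real n + (22) * real n ^ 2 + (6) * real n ^ 3) * Fc 2 (4/3) (5/3) n k + ((-140) + (-224) * real n + (-119) * real n ^ 2 + (-21) * real n ^ 3) * Fc 2 (4/3) (5/3) (Suc n) k + ((-192) + (-232) * real n + (-92) * real n ^ 2 + (-12) * real n ^ 3) * Fc 2 (4/3) (5/3) (Suc (Suc n)) k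
     = Hc 2 (4/3) (5/3) n (Suc k) * p3 (real (Suc k)) - Hc 2 (4/3) (5/3) n k * p3 (real k)"
proof (rule pointwise)
  show "real n + 2 \<noteq> 0" "real n + 2 + 1 \<noteq> 0" using assms by simp_all
  show "((8) + (24) * real n + (22) * real n ^ 2 + (6) * real n ^ 3) * ((real n + 2 - real k) * (real n + 1 - real k)) * ((real n + 2) * (real n + 2 + 1)) * (4 * (real k + 1) * (4/3 + real k) * (5/3 + real k))
    + ((-140) + (-224) * real n + (-119) * real n ^ 2 + (-21) * real n ^ 3) * ((real n + 2 - real k) * (real n + 2 + 2 * real k)) * ((real n + 1) * (real n + 2 + 1)) * (4 * (real k + 1) * (4/3 + real k) * (5/3 + real k))
    + ((-192) + (-232) * real n + (-92) * real n ^ 2 + (-12) * real n ^ 3) * ((real n + 2 + 2 * real k) * (real n + 2 + 2 * real k + 1)) * ((real n + 2) * (real n + 1)) * (4 * (real k + 1) * (4/3 + real k) * (5/3 + real k))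
    + ((real n + 2 - real k) * (real n + 2 + 2 * real k) * (real n + 2 + 2 * real k + 1)) * p3 (real (Suc k)) * ((real n + 2) * (real n + 1)) * ((real n + 2) * (real n + 2 + 1))
    + p3 (real k) * ((real n + 2) * (real n + 1)) * ((real n + 2) * (real n + 2 + 1)) * (4 * (real k + 1) * (4/3 + real k) * (5/3 + real k)) = 0"
    using poly3[of "real n" "real k"] unfolding of_nat_Suc .
qed simp_all

lemma rec3: assumes "n \<ge> 1" shows
  "((8) + (24) * real n + (22) * real n ^ 2 + (6) * real n ^ 3) * S 2 (4/3) (5/3) n + ((-140) + (-224) * real n + (-119) * real n ^ 2 + (-21) * real n ^ 3) * S 2 (4/3) (5/3) (Suc n) + ((-192) + (-232) * real n + (-92) * real n ^ 2 + (-12) * real n ^ 3) * S 2 (4/3) (5/3) (Suc (Suc n)) = 0"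
  by (rule recur[OF pw3[OF assms]]) (simp add: p3_def)

definition T3 :: "nat \<Rightarrow> real" where "T3 n = 2 * (1 - (-8) ^ (n + 1)) / (9 * (real n + 1) * (3 * real n + 2) * 4 ^ n)"

lemma Trec3: "((8) + (24) * real n + (22) * real n ^ 2 + (6) * real n ^ 3) * T3 n + ((-140) + (-224) * real n + (-119) * real n ^ 2 + (-21) * real n ^ 3) * T3 (Suc n) + ((-192) + (-232) * real n + (-92) * real n ^ 2 + (-12) * real n ^ 3) * T3 (Suc (Suc n)) = 0"
proof -
  define u :: real where "u = (-8)^n"
  define v :: real where "v = 4^n"
  define N where "N = real n"
  have v: "v > 0" unfolding v_def by simp
  have N: "N \<ge> 0" unfolding N_def by simp
  have e: "T3 n = (2 * (1 - (-8) * u)) / (9 * (N + 1) * (3 * N + 2) * v)"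
     "T3 (Suc n) = (2 * (1 - (-8) * ((-8) * u))) / (9 * ((N + 1) + 1) * (3 * (N + 1) + 2) * (4 * v))"
     "T3 (Suc (Suc n)) = (2 * (1 - (-8) * (64 * u))) / (9 * ((N + 2) + 1) * (3 * (N + 2) + 2) * (16 * v))"
    by (simp_all add: T3_def u_def v_def N_def power_Suc algebra_simps)
  have nz: "(9 * (N + 1) * (3 * N + 2) * v) \<noteq> 0" "(9 * ((N + 1) + 1) * (3 * (N + 1) + 2) * (4 * v)) \<noteq> 0" "(9 * ((N + 2) + 1) * (3 * (N + 2) + 2) * (16 * v)) \<noteq> 0"
    using v N by (auto simp: add_nonneg_eq_0_iff)
  show ?thesis unfolding e N_def[symmetric]
    apply (rule abs_rec[where xa = "(2 * (1 - (-8) * u))" and xb = "(2 * (1 - (-8) * ((-8) * u)))" and xc = "(2 * (1 - (-8) * (64 * u)))", OF _ _ _ _ nz])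
    subgoal using nz by simp
    subgoal using nz by simp
    subgoal using nz by simp
    subgoal by algebra
    done
qed

lemma S3: assumes "n \<ge> 1" shows "S 2 (4/3) (5/3) n = T3 n"
proof (rule rec_uniq[where S = "S 2 (4/3) (5/3)" and T = T3 and Aa = "\<lambda>n. ((8) + (24) * real n + (22) * real n ^ 2 + (6) * real n ^ 3)" and Ab = "\<lambda>n. ((-140) + (-224) * real n + (-119) * real n ^ 2 + (-21) * real n ^ 3)" and Ac = "\<lambda>n. ((-192) + (-232) * real n + (-92) * real n ^ 2 + (-12) * real n ^ 3)"])
  show "\<And>n. n \<ge> 1 \<Longrightarrow> (\<lambda>n. ((8) + (24) * real n + (22) * real n ^ 2 + (6) * real n ^ 3)) n * S 2 (4/3) (5/3) n + (\<lambda>n. ((-140) + (-224) * real n + (-119) * real n ^ 2 + (-21) * real n ^ 3)) n * S 2 (4/3) (5/3) (Suc n) + (\<lambda>n. ((-192) + (-232) * real n + (-92) * real n ^ 2 + (-12) * real n ^ 3)) n * S 2 (4/3) (5/3) (Suc (Suc n)) = 0"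
    using rec3 by simp
  show "\<And>n. n \<ge> 1 \<Longrightarrow> (\<lambda>n. ((8) + (24) * real n + (22) * real n ^ 2 + (6) * real n ^ 3)) n * T3 n + (\<lambda>n. ((-140) + (-224) * real n + (-119) * real n ^ 2 + (-21) * real n ^ 3)) n * T3 (Suc n) + (\<lambda>n. ((-192) + (-232) * real n + (-92) * real n ^ 2 + (-12) * real n ^ 3)) n * T3 (Suc (Suc n)) = 0"
    using Trec3 by simp
  show "\<And>n. n \<ge> 1 \<Longrightarrow> (\<lambda>n. ((-192) + (-232) * real n + (-92) * real n ^ 2 + (-12) * real n ^ 3)) n \<noteq> 0"
  proof -
    fix n :: nat assume "n \<ge> 1"
    then have p: "real n > 0" by simp
    have "0 < ((192) + (232) * real n + (92) * real n ^ 2 + (12) * real n ^ 3)" using p by (intro add_pos_pos mult_pos_pos zero_less_power) auto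
    then show "(\<lambda>n. ((-192) + (-232) * real n + (-92) * real n ^ 2 + (-12) * real n ^ 3)) n \<noteq> 0" by simp
  qed
  show "S 2 (4/3) (5/3) 1 = T3 1"
    by (simp add: S_def Fc_def Q_def B_def T3_def)
  show "S 2 (4/3) (5/3) 2 = T3 2"
    by (simp add: S_def Fc_def Q_def B_def T3_def numeral_2_eq_2 atMost_Suc pochhammer_rec')
qed (rule assms)

lemma final3: assumes "n \<ge> 1" shows "hyp3F2_term n ((real n + 3) / 2) ((real n + 2) / 2) (4/3) (5/3) 1 = 2 * (1 - (-8) ^ (n + 1)) / (9 * (real n + 1) * (3 * real n + 2) * 4 ^ n)"
proof -
  have "hyp3F2_term n ((real n + 3) / 2) ((real n + 2) / 2) (4/3) (5/3) 1 = S 2 (4/3) (5/3) n"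
    by (rule convA) (simp_all add: field_simps)
  also have "\<dots> = T3 n" by (rule S3[OF assms])
  finally show ?thesis by (simp add: T3_def)
qed

definition p4 :: "real \<Rightarrow> real" where "p4 x = ((24) * x + (-108) * x ^ 2 + (108) * x ^ 3)"

lemma poly4: fixes N K :: real shows
 "((28) + (54) * N + (32) * N ^ 2 + (6) * N ^ 3) * ((N + 2 - K) * (N + 1 - K)) * ((N + 1) * (N + 1 + 1)) * (4 * (K + 1) * (1/3 + K) * (2/3 + K))
    + ((-104) + (-198) * N + (-115) * N ^ 2 + (-21) * N ^ 3) * ((N + 2 - K) * (N + 1 + 2 * K)) * ((N + 1) * (N + 1 + 1)) * (4 * (K + 1) * (1/3 + K) * (2/3 + K))
    + ((-32) + (-72) * N + (-52) * N ^ 2 + (-12) * N ^ 3) * ((N + 1 + 2 * K) * (N + 1 + 2 * K + 1)) * ((N + 2) * (N + 1)) * (4 * (K + 1) * (1/3 + K) * (2/3 + K))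
    + ((N + 2 - K) * (N + 1 + 2 * K) * (N + 1 + 2 * K + 1)) * p4 (1 + K) * ((N + 2) * (N + 1)) * ((N + 1) * (N + 1 + 1))
    + p4 (K) * ((N + 2) * (N + 1)) * ((N + 1) * (N + 1 + 1)) * (4 * (K + 1) * (1/3 + K) * (2/3 + K)) = 0"
  unfolding p4_def by algebra

lemma pw4: assumes "n \<ge> 1" shows
  "((28) + (54) * real n + (32) * real n ^ 2 + (6) * real n ^ 3) * Fc 1 (1/3) (2/3) n k + ((-104) + (-198) * real n + (-115) * real n ^ 2 + (-21) * real n ^ 3) * Fc 1 (1/3) (2/3) (Suc n) k + ((-32) + (-72) * real n + (-52) * real n ^ 2 + (-12) * real n ^ 3) * Fc 1 (1/3) (2/3) (Suc (Suc n)) k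
     = Hc 1 (1/3) (2/3) n (Suc k) * p4 (real (Suc k)) - Hc 1 (1/3) (2/3) n k * p4 (real k)"
proof (rule pointwise)
  show "real n + 1 \<noteq> 0" "real n + 1 + 1 \<noteq> 0" using assms by simp_all
  show "((28) + (54) * real n + (32) * real n ^ 2 + (6) * real n ^ 3) * ((real n + 2 - real k) * (real n + 1 - real k)) * ((real n + 1) * (real n + 1 + 1)) * (4 * (real k + 1) * (1/3 + real k) * (2/3 + real k))
    + ((-104) + (-198) * real n + (-115) * real n ^ 2 + (-21) * real n ^ 3) * ((real n + 2 - real k) * (real n + 1 + 2 * real k)) * ((real n + 1) * (real n + 1 + 1)) * (4 * (real k + 1) * (1/3 + real k) * (2/3 + real k))
    + ((-32) + (-72) * real n + (-52) * real n ^ 2 + (-12) * real n ^ 3) * ((real n + 1 + 2 * real k) * (real n + 1 + 2 * real k + 1)) * ((real n + 2) * (real n + 1)) * (4 * (real k + 1) * (1/3 + real k) * (2/3 + real k))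
    + ((real n + 2 - real k) * (real n + 1 + 2 * real k) * (real n + 1 + 2 * real k + 1)) * p4 (real (Suc k)) * ((real n + 2) * (real n + 1)) * ((real n + 1) * (real n + 1 + 1))
    + p4 (real k) * ((real n + 2) * (real n + 1)) * ((real n + 1) * (real n + 1 + 1)) * (4 * (real k + 1) * (1/3 + real k) * (2/3 + real k)) = 0"
    using poly4[of "real n" "real k"] unfolding of_nat_Suc .
qed simp_all

lemma rec4: assumes "n \<ge> 1" shows
  "((28) + (54) * real n + (32) * real n ^ 2 + (6) * real n ^ 3) * S 1 (1/3) (2/3) n + ((-104) + (-198) * real n + (-115) * real n ^ 2 + (-21) * real n ^ 3) * S 1 (1/3) (2/3) (Suc n) + ((-32) + (-72) * real n + (-52) * real n ^ 2 + (-12) * real n ^ 3) * S 1 (1/3) (2/3) (Suc (Suc n)) = 0"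
  by (rule recur[OF pw4[OF assms]]) (simp add: p4_def)

definition T4 :: "nat \<Rightarrow> real" where "T4 n = (1 + 2 * (9 * real n + 4) * (-8) ^ n) / (9 * 4 ^ n)"

lemma Trec4: "((28) + (54) * real n + (32) * real n ^ 2 + (6) * real n ^ 3) * T4 n + ((-104) + (-198) * real n + (-115) * real n ^ 2 + (-21) * real n ^ 3) * T4 (Suc n) + ((-32) + (-72) * real n + (-52) * real n ^ 2 + (-12) * real n ^ 3) * T4 (Suc (Suc n)) = 0"
proof -
  define u :: real where "u = (-8)^n"
  define v :: real where "v = 4^n"
  define N where "N = real n"
  have v: "v > 0" unfolding v_def by simp
  have N: "N \<ge> 0" unfolding N_def by simp
  have e: "T4 n = (1 + 2 * (9 * N + 4) * u) / (9 * v)"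
     "T4 (Suc n) = (1 + 2 * (9 * (N + 1) + 4) * ((-8) * u)) / (9 * (4 * v))"
     "T4 (Suc (Suc n)) = (1 + 2 * (9 * (N + 2) + 4) * (64 * u)) / (9 * (16 * v))"
    by (simp_all add: T4_def u_def v_def N_def power_Suc algebra_simps)
  have nz: "(9 * v) \<noteq> 0" "(9 * (4 * v)) \<noteq> 0" "(9 * (16 * v)) \<noteq> 0"
    using v N by (auto simp: add_nonneg_eq_0_iff)
  show ?thesis unfolding e N_def[symmetric]
    apply (rule abs_rec[where xa = "(1 + 2 * (9 * N + 4) * u)" and xb = "(1 + 2 * (9 * (N + 1) + 4) * ((-8) * u))" and xc = "(1 + 2 * (9 * (N + 2) + 4) * (64 * u))", OF _ _ _ _ nz])
    subgoal using nz by simp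
    subgoal using nz by simp
    subgoal using nz by simp
    subgoal by algebra
    done
qed

lemma S4: assumes "n \<ge> 1" shows "S 1 (1/3) (2/3) n = T4 n"
proof (rule rec_uniq[where S = "S 1 (1/3) (2/3)" and T = T4 and Aa = "\<lambda>n. ((28) + (54) * real n + (32) * real n ^ 2 + (6) * real n ^ 3)" and Ab = "\<lambda>n. ((-104) + (-198) * real n + (-115) * real n ^ 2 + (-21) * real n ^ 3)" and Ac = "\<lambda>n. ((-32) + (-72) * real n + (-52) * real n ^ 2 + (-12) * real n ^ 3)"])
  show "\<And>n. n \<ge> 1 \<Longrightarrow> (\<lambda>n. ((28) + (54) * real n + (32) * real n ^ 2 + (6) * real n ^ 3)) n * S 1 (1/3) (2/3) n + (\<lambda>n. ((-104) + (-198) * real n + (-115) * real n ^ 2 + (-21) * real n ^ 3)) n * S 1 (1/3) (2/3) (Suc n) + (\<lambda>n. ((-32) + (-72) * real n + (-52) * real n ^ 2 + (-12) * real n ^ 3)) n * S 1 (1/3) (2/3) (Suc (Suc n)) = 0"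
    using rec4 by simp
  show "\<And>n. n \<ge> 1 \<Longrightarrow> (\<lambda>n. ((28) + (54) * real n + (32) * real n ^ 2 + (6) * real n ^ 3)) n * T4 n + (\<lambda>n. ((-104) + (-198) * real n + (-115) * real n ^ 2 + (-21) * real n ^ 3)) n * T4 (Suc n) + (\<lambda>n. ((-32) + (-72) * real n + (-52) * real n ^ 2 + (-12) * real n ^ 3)) n * T4 (Suc (Suc n)) = 0"
    using Trec4 by simp
  show "\<And>n. n \<ge> 1 \<Longrightarrow> (\<lambda>n. ((-32) + (-72) * real n + (-52) * real n ^ 2 + (-12) * real n ^ 3)) n \<noteq> 0"
  proof -
    fix n :: nat assume "n \<ge> 1"
    then have p: "real n > 0" by simp
    have "0 < ((32) + (72) * real n + (52) * real n ^ 2 + (12) * real n ^ 3)" using p by (intro add_pos_pos mult_pos_pos zero_less_power) auto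
    then show "(\<lambda>n. ((-32) + (-72) * real n + (-52) * real n ^ 2 + (-12) * real n ^ 3)) n \<noteq> 0" by simp
  qed
  show "S 1 (1/3) (2/3) 1 = T4 1"
    by (simp add: S_def Fc_def Q_def B_def T4_def)
  show "S 1 (1/3) (2/3) 2 = T4 2"
    by (simp add: S_def Fc_def Q_def B_def T4_def numeral_2_eq_2 atMost_Suc pochhammer_rec')
qed (rule assms)

lemma final4: assumes "n \<ge> 1" shows "hyp3F2_term n ((real n + 1) / 2) ((real n + 2) / 2) (1/3) (2/3) 1 = (1 + 2 * (9 * real n + 4) * (-8) ^ n) / (9 * 4 ^ n)"
proof -
  have "hyp3F2_term n ((real n + 1) / 2) ((real n + 2) / 2) (1/3) (2/3) 1 = S 1 (1/3) (2/3) n"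
    by (rule convB) (simp_all add: field_simps)
  also have "\<dots> = T4 n" by (rule S4[OF assms])
  finally show ?thesis by (simp add: T4_def)
qed

definition p5 :: "real \<Rightarrow> real" where "p5 x = ((-12) * x + (108) * x ^ 3)"

lemma poly5: fixes N K :: real shows
 "((32) + (60) * N + (34) * N ^ 2 + (6) * N ^ 3) * ((N + 2 - K) * (N + 1 - K)) * ((N + 2) * (N + 2 + 1)) * (4 * (K + 1) * (2/3 + K) * (4/3 + K))
    + ((-236) + (-320) * N + (-143) * N ^ 2 + (-21) * N ^ 3) * ((N + 2 - K) * (N + 2 + 2 * K)) * ((N + 1) * (N + 2 + 1)) * (4 * (K + 1) * (2/3 + K) * (4/3 + K))
    + ((-120) + (-172) * N + (-80) * N ^ 2 + (-12) * N ^ 3) * ((N + 2 + 2 * K) * (N + 2 + 2 * K + 1)) * ((N + 2) * (N + 1)) * (4 * (K + 1) * (2/3 + K) * (4/3 + K))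
    + ((N + 2 - K) * (N + 2 + 2 * K) * (N + 2 + 2 * K + 1)) * p5 (1 + K) * ((N + 2) * (N + 1)) * ((N + 2) * (N + 2 + 1))
    + p5 (K) * ((N + 2) * (N + 1)) * ((N + 2) * (N + 2 + 1)) * (4 * (K + 1) * (2/3 + K) * (4/3 + K)) = 0"
  unfolding p5_def by algebra

lemma pw5: assumes "n \<ge> 1" shows
  "((32) + (60) * real n + (34) * real n ^ 2 + (6) * real n ^ 3) * Fc 2 (2/3) (4/3) n k + ((-236) + (-320) * real n + (-143) * real n ^ 2 + (-21) * real n ^ 3) * Fc 2 (2/3) (4/3) (Suc n) k + ((-120) + (-172) * real n + (-80) * real n ^ 2 + (-12) * real n ^ 3) * Fc 2 (2/3) (4/3) (Suc (Suc n)) k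
     = Hc 2 (2/3) (4/3) n (Suc k) * p5 (real (Suc k)) - Hc 2 (2/3) (4/3) n k * p5 (real k)"
proof (rule pointwise)
  show "real n + 2 \<noteq> 0" "real n + 2 + 1 \<noteq> 0" using assms by simp_all
  show "((32) + (60) * real n + (34) * real n ^ 2 + (6) * real n ^ 3) * ((real n + 2 - real k) * (real n + 1 - real k)) * ((real n + 2) * (real n + 2 + 1)) * (4 * (real k + 1) * (2/3 + real k) * (4/3 + real k))
    + ((-236) + (-320) * real n + (-143) * real n ^ 2 + (-21) * real n ^ 3) * ((real n + 2 - real k) * (real n + 2 + 2 * real k)) * ((real n + 1) * (real n + 2 + 1)) * (4 * (real k + 1) * (2/3 + real k) * (4/3 + real k))
    + ((-120) + (-172) * real n + (-80) * real n ^ 2 + (-12) * real n ^ 3) * ((real n + 2 + 2 * real k) * (real n + 2 + 2 * real k + 1)) * ((real n + 2) * (real n + 1)) * (4 * (real k + 1) * (2/3 + real k) * (4/3 + real k))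
    + ((real n + 2 - real k) * (real n + 2 + 2 * real k) * (real n + 2 + 2 * real k + 1)) * p5 (real (Suc k)) * ((real n + 2) * (real n + 1)) * ((real n + 2) * (real n + 2 + 1))
    + p5 (real k) * ((real n + 2) * (real n + 1)) * ((real n + 2) * (real n + 2 + 1)) * (4 * (real k + 1) * (2/3 + real k) * (4/3 + real k)) = 0"
    using poly5[of "real n" "real k"] unfolding of_nat_Suc .
qed simp_all

lemma rec5: assumes "n \<ge> 1" shows
  "((32) + (60) * real n + (34) * real n ^ 2 + (6) * real n ^ 3) * S 2 (2/3) (4/3) n + ((-236) + (-320) * real n + (-143) * real n ^ 2 + (-21) * real n ^ 3) * S 2 (2/3) (4/3) (Suc n) + ((-120) + (-172) * real n + (-80) * real n ^ 2 + (-12) * real n ^ 3) * S 2 (2/3) (4/3) (Suc (Suc n)) = 0"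
  by (rule recur[OF pw5[OF assms]]) (simp add: p5_def)

definition T5 :: "nat \<Rightarrow> real" where "T5 n = (4 * (9 * real n + 7) * (-8) ^ n - 1) / (27 * (real n + 1) * 4 ^ n)"

lemma Trec5: "((32) + (60) * real n + (34) * real n ^ 2 + (6) * real n ^ 3) * T5 n + ((-236) + (-320) * real n + (-143) * real n ^ 2 + (-21) * real n ^ 3) * T5 (Suc n) + ((-120) + (-172) * real n + (-80) * real n ^ 2 + (-12) * real n ^ 3) * T5 (Suc (Suc n)) = 0"
proof -
  define u :: real where "u = (-8)^n"
  define v :: real where "v = 4^n"
  define N where "N = real n"
  have v: "v > 0" unfolding v_def by simp
  have N: "N \<ge> 0" unfolding N_def by simp
  have e: "T5 n = (4 * (9 * N + 7) * u - 1) / (27 * (N + 1) * v)"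
     "T5 (Suc n) = (4 * (9 * (N + 1) + 7) * ((-8) * u) - 1) / (27 * ((N + 1) + 1) * (4 * v))"
     "T5 (Suc (Suc n)) = (4 * (9 * (N + 2) + 7) * (64 * u) - 1) / (27 * ((N + 2) + 1) * (16 * v))"
    by (simp_all add: T5_def u_def v_def N_def power_Suc algebra_simps)
  have nz: "(27 * (N + 1) * v) \<noteq> 0" "(27 * ((N + 1) + 1) * (4 * v)) \<noteq> 0" "(27 * ((N + 2) + 1) * (16 * v)) \<noteq> 0"
    using v N by (auto simp: add_nonneg_eq_0_iff)
  show ?thesis unfolding e N_def[symmetric]
    apply (rule abs_rec[where xa = "(4 * (9 * N + 7) * u - 1)" and xb = "(4 * (9 * (N + 1) + 7) * ((-8) * u) - 1)" and xc = "(4 * (9 * (N + 2) + 7) * (64 * u) - 1)", OF _ _ _ _ nz])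
    subgoal using nz by simp
    subgoal using nz by simp
    subgoal using nz by simp
    subgoal by algebra
    done
qed

lemma S5: assumes "n \<ge> 1" shows "S 2 (2/3) (4/3) n = T5 n"
proof (rule rec_uniq[where S = "S 2 (2/3) (4/3)" and T = T5 and Aa = "\<lambda>n. ((32) + (60) * real n + (34) * real n ^ 2 + (6) * real n ^ 3)" and Ab = "\<lambda>n. ((-236) + (-320) * real n + (-143) * real n ^ 2 + (-21) * real n ^ 3)" and Ac = "\<lambda>n. ((-120) + (-172) * real n + (-80) * real n ^ 2 + (-12) * real n ^ 3)"])
  show "\<And>n. n \<ge> 1 \<Longrightarrow> (\<lambda>n. ((32) + (60) * real n + (34) * real n ^ 2 + (6) * real n ^ 3)) n * S 2 (2/3) (4/3) n + (\<lambda>n. ((-236) + (-320) * real n + (-143) * real n ^ 2 + (-21) * real n ^ 3)) n * S 2 (2/3) (4/3) (Suc n) + (\<lambda>n. ((-120) + (-172) * real n + (-80) * real n ^ 2 + (-12) * real n ^ 3)) n * S 2 (2/3) (4/3) (Suc (Suc n)) = 0"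
    using rec5 by simp
  show "\<And>n. n \<ge> 1 \<Longrightarrow> (\<lambda>n. ((32) + (60) * real n + (34) * real n ^ 2 + (6) * real n ^ 3)) n * T5 n + (\<lambda>n. ((-236) + (-320) * real n + (-143) * real n ^ 2 + (-21) * real n ^ 3)) n * T5 (Suc n) + (\<lambda>n. ((-120) + (-172) * real n + (-80) * real n ^ 2 + (-12) * real n ^ 3)) n * T5 (Suc (Suc n)) = 0"
    using Trec5 by simp
  show "\<And>n. n \<ge> 1 \<Longrightarrow> (\<lambda>n. ((-120) + (-172) * real n + (-80) * real n ^ 2 + (-12) * real n ^ 3)) n \<noteq> 0"
  proof -
    fix n :: nat assume "n \<ge> 1"
    then have p: "real n > 0" by simp
    have "0 < ((120) + (172) * real n + (80) * real n ^ 2 + (12) * real n ^ 3)" using p by (intro add_pos_pos mult_pos_pos zero_less_power) auto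
    then show "(\<lambda>n. ((-120) + (-172) * real n + (-80) * real n ^ 2 + (-12) * real n ^ 3)) n \<noteq> 0" by simp
  qed
  show "S 2 (2/3) (4/3) 1 = T5 1"
    by (simp add: S_def Fc_def Q_def B_def T5_def)
  show "S 2 (2/3) (4/3) 2 = T5 2"
    by (simp add: S_def Fc_def Q_def B_def T5_def numeral_2_eq_2 atMost_Suc pochhammer_rec')
qed (rule assms)

lemma final5: assumes "n \<ge> 1" shows "hyp3F2_term n ((real n + 3) / 2) ((real n + 2) / 2) (2/3) (4/3) 1 = (4 * (9 * real n + 7) * (-8) ^ n - 1) / (27 * (real n + 1) * 4 ^ n)"
proof -
  have "hyp3F2_term n ((real n + 3) / 2) ((real n + 2) / 2) (2/3) (4/3) 1 = S 2 (2/3) (4/3) n"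
    by (rule convA) (simp_all add: field_simps)
  also have "\<dots> = T5 n" by (rule S5[OF assms])
  finally show ?thesis by (simp add: T5_def)
qed

definition p6 :: "real \<Rightarrow> real" where "p6 x = ((24) * x + (108) * x ^ 2 + (108) * x ^ 3)"

lemma poly6: fixes N K :: real shows
 "((36) + (66) * N + (36) * N ^ 2 + (6) * N ^ 3) * ((N + 2 - K) * (N + 1 - K)) * ((N + 3) * (N + 3 + 1)) * (4 * (K + 1) * (4/3 + K) * (5/3 + K))
    + ((-396) + (-456) * N + (-171) * N ^ 2 + (-21) * N ^ 3) * ((N + 2 - K) * (N + 3 + 2 * K)) * ((N + 1) * (N + 3 + 1)) * (4 * (K + 1) * (4/3 + K) * (5/3 + K))
    + ((-288) + (-312) * N + (-108) * N ^ 2 + (-12) * N ^ 3) * ((N + 3 + 2 * K) * (N + 3 + 2 * K + 1)) * ((N + 2) * (N + 1)) * (4 * (K + 1) * (4/3 + K) * (5/3 + K))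
    + ((N + 2 - K) * (N + 3 + 2 * K) * (N + 3 + 2 * K + 1)) * p6 (1 + K) * ((N + 2) * (N + 1)) * ((N + 3) * (N + 3 + 1))
    + p6 (K) * ((N + 2) * (N + 1)) * ((N + 3) * (N + 3 + 1)) * (4 * (K + 1) * (4/3 + K) * (5/3 + K)) = 0"
  unfolding p6_def by algebra

lemma pw6: assumes "n \<ge> 1" shows
  "((36) + (66) * real n + (36) * real n ^ 2 + (6) * real n ^ 3) * Fc 3 (4/3) (5/3) n k + ((-396) + (-456) * real n + (-171) * real n ^ 2 + (-21) * real n ^ 3) * Fc 3 (4/3) (5/3) (Suc n) k + ((-288) + (-312) * real n + (-108) * real n ^ 2 + (-12) * real n ^ 3) * Fc 3 (4/3) (5/3) (Suc (Suc n)) k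
     = Hc 3 (4/3) (5/3) n (Suc k) * p6 (real (Suc k)) - Hc 3 (4/3) (5/3) n k * p6 (real k)"
proof (rule pointwise)
  show "real n + 3 \<noteq> 0" "real n + 3 + 1 \<noteq> 0" using assms by simp_all
  show "((36) + (66) * real n + (36) * real n ^ 2 + (6) * real n ^ 3) * ((real n + 2 - real k) * (real n + 1 - real k)) * ((real n + 3) * (real n + 3 + 1)) * (4 * (real k + 1) * (4/3 + real k) * (5/3 + real k))
    + ((-396) + (-456) * real n + (-171) * real n ^ 2 + (-21) * real n ^ 3) * ((real n + 2 - real k) * (real n + 3 + 2 * real k)) * ((real n + 1) * (real n + 3 + 1)) * (4 * (real k + 1) * (4/3 + real k) * (5/3 + real k))
    + ((-288) + (-312) * real n + (-108) * real n ^ 2 + (-12) * real n ^ 3) * ((real n + 3 + 2 * real k) * (real n + 3 + 2 * real k + 1)) * ((real n + 2) * (real n + 1)) * (4 * (real k + 1) * (4/3 + real k) * (5/3 + real k))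
    + ((real n + 2 - real k) * (real n + 3 + 2 * real k) * (real n + 3 + 2 * real k + 1)) * p6 (real (Suc k)) * ((real n + 2) * (real n + 1)) * ((real n + 3) * (real n + 3 + 1))
    + p6 (real k) * ((real n + 2) * (real n + 1)) * ((real n + 3) * (real n + 3 + 1)) * (4 * (real k + 1) * (4/3 + real k) * (5/3 + real k)) = 0"
    using poly6[of "real n" "real k"] unfolding of_nat_Suc .
qed simp_all

lemma rec6: assumes "n \<ge> 1" shows
  "((36) + (66) * real n + (36) * real n ^ 2 + (6) * real n ^ 3) * S 3 (4/3) (5/3) n + ((-396) + (-456) * real n + (-171) * real n ^ 2 + (-21) * real n ^ 3) * S 3 (4/3) (5/3) (Suc n) + ((-288) + (-312) * real n + (-108) * real n ^ 2 + (-12) * real n ^ 3) * S 3 (4/3) (5/3) (Suc (Suc n)) = 0"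
  by (rule recur[OF pw6[OF assms]]) (simp add: p6_def)

definition T6 :: "nat \<Rightarrow> real" where "T6 n = 2 * (1 - (9 * real n + 10) * (-8) ^ (n + 1)) / (81 * (real n + 1) * (real n + 2) * 4 ^ n)"

lemma Trec6: "((36) + (66) * real n + (36) * real n ^ 2 + (6) * real n ^ 3) * T6 n + ((-396) + (-456) * real n + (-171) * real n ^ 2 + (-21) * real n ^ 3) * T6 (Suc n) + ((-288) + (-312) * real n + (-108) * real n ^ 2 + (-12) * real n ^ 3) * T6 (Suc (Suc n)) = 0"
proof -
  define u :: real where "u = (-8)^n"
  define v :: real where "v = 4^n"
  define N where "N = real n"
  have v: "v > 0" unfolding v_def by simp
  have N: "N \<ge> 0" unfolding N_def by simp
  have e: "T6 n = (2 * (1 - (9 * N + 10) * ((-8) * u))) / (81 * (N + 1) * (N + 2) * v)"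
     "T6 (Suc n) = (2 * (1 - (9 * (N + 1) + 10) * ((-8) * ((-8) * u)))) / (81 * ((N + 1) + 1) * ((N + 1) + 2) * (4 * v))"
     "T6 (Suc (Suc n)) = (2 * (1 - (9 * (N + 2) + 10) * ((-8) * (64 * u)))) / (81 * ((N + 2) + 1) * ((N + 2) + 2) * (16 * v))"
    by (simp_all add: T6_def u_def v_def N_def power_Suc algebra_simps)
  have nz: "(81 * (N + 1) * (N + 2) * v) \<noteq> 0" "(81 * ((N + 1) + 1) * ((N + 1) + 2) * (4 * v)) \<noteq> 0" "(81 * ((N + 2) + 1) * ((N + 2) + 2) * (16 * v)) \<noteq> 0"
    using v N by (auto simp: add_nonneg_eq_0_iff)
  show ?thesis unfolding e N_def[symmetric]
    apply (rule abs_rec[where xa = "(2 * (1 - (9 * N + 10) * ((-8) * u)))" and xb = "(2 * (1 - (9 * (N + 1) + 10) * ((-8) * ((-8) * u))))" and xc = "(2 * (1 - (9 * (N + 2) + 10) * ((-8) * (64 * u))))", OF _ _ _ _ nz])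
    subgoal using nz by simp
    subgoal using nz by simp
    subgoal using nz by simp
    subgoal by algebra
    done
qed

lemma S6: assumes "n \<ge> 1" shows "S 3 (4/3) (5/3) n = T6 n"
proof (rule rec_uniq[where S = "S 3 (4/3) (5/3)" and T = T6 and Aa = "\<lambda>n. ((36) + (66) * real n + (36) * real n ^ 2 + (6) * real n ^ 3)" and Ab = "\<lambda>n. ((-396) + (-456) * real n + (-171) * real n ^ 2 + (-21) * real n ^ 3)" and Ac = "\<lambda>n. ((-288) + (-312) * real n + (-108) * real n ^ 2 + (-12) * real n ^ 3)"])
  show "\<And>n. n \<ge> 1 \<Longrightarrow> (\<lambda>n. ((36) + (66) * real n + (36) * real n ^ 2 + (6) * real n ^ 3)) n * S 3 (4/3) (5/3) n + (\<lambda>n. ((-396) + (-456) * real n + (-171) * real n ^ 2 + (-21) * real n ^ 3)) n * S 3 (4/3) (5/3) (Suc n) + (\<lambda>n. ((-288) + (-312) * real n + (-108) * real n ^ 2 + (-12) * real n ^ 3)) n * S 3 (4/3) (5/3) (Suc (Suc n)) = 0"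
    using rec6 by simp
  show "\<And>n. n \<ge> 1 \<Longrightarrow> (\<lambda>n. ((36) + (66) * real n + (36) * real n ^ 2 + (6) * real n ^ 3)) n * T6 n + (\<lambda>n. ((-396) + (-456) * real n + (-171) * real n ^ 2 + (-21) * real n ^ 3)) n * T6 (Suc n) + (\<lambda>n. ((-288) + (-312) * real n + (-108) * real n ^ 2 + (-12) * real n ^ 3)) n * T6 (Suc (Suc n)) = 0"
    using Trec6 by simp
  show "\<And>n. n \<ge> 1 \<Longrightarrow> (\<lambda>n. ((-288) + (-312) * real n + (-108) * real n ^ 2 + (-12) * real n ^ 3)) n \<noteq> 0"
  proof -
    fix n :: nat assume "n \<ge> 1"
    then have p: "real n > 0" by simp
    have "0 < ((288) + (312) * real n + (108) * real n ^ 2 + (12) * real n ^ 3)" using p by (intro add_pos_pos mult_pos_pos zero_less_power) auto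
    then show "(\<lambda>n. ((-288) + (-312) * real n + (-108) * real n ^ 2 + (-12) * real n ^ 3)) n \<noteq> 0" by simp
  qed
  show "S 3 (4/3) (5/3) 1 = T6 1"
    by (simp add: S_def Fc_def Q_def B_def T6_def)
  show "S 3 (4/3) (5/3) 2 = T6 2"
    by (simp add: S_def Fc_def Q_def B_def T6_def numeral_2_eq_2 atMost_Suc pochhammer_rec')
qed (rule assms)

lemma final6: assumes "n \<ge> 1" shows "hyp3F2_term n ((real n + 4) / 2) ((real n + 3) / 2) (4/3) (5/3) 1 = 2 * (1 - (9 * real n + 10) * (-8) ^ (n + 1)) / (81 * (real n + 1) * (real n + 2) * 4 ^ n)"
proof -
  have "hyp3F2_term n ((real n + 4) / 2) ((real n + 3) / 2) (4/3) (5/3) 1 = S 3 (4/3) (5/3) n"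
    by (rule convA) (simp_all add: field_simps)
  also have "\<dots> = T6 n" by (rule S6[OF assms])
  finally show ?thesis by (simp add: T6_def)
qed

theorem proposition5:
  fixes n :: nat
  assumes "n \<ge> 1"
  shows
   "(hyp3F2_term n ((real n + 1) / 2) (real n / 2) (1/3) (2/3) 1 = (1 + 2 * (-8) ^ n) / (3 * 4 ^ n)) \<and>
    (hyp3F2_term n ((real n + 1) / 2) ((real n + 2) / 2) (2/3) (4/3) 1 = (4 * (-8) ^ n - 1) / (3 * (3 * real n + 1) * 4 ^ n)) \<and>
    (hyp3F2_term n ((real n + 3) / 2) ((real n + 2) / 2) (4/3) (5/3) 1 = 2 * (1 - (-8) ^ (n + 1)) / (9 * (real n + 1) * (3 * real n + 2) * 4 ^ n)) \<and>
    (hyp3F2_term n ((real n + 1) / 2) ((real n + 2) / 2) (1/3) (2/3) 1 = (1 + 2 * (9 * real n + 4) * (-8) ^ n) / (9 * 4 ^ n)) \<and>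
    (hyp3F2_term n ((real n + 3) / 2) ((real n + 2) / 2) (2/3) (4/3) 1 = (4 * (9 * real n + 7) * (-8) ^ n - 1) / (27 * (real n + 1) * 4 ^ n)) \<and>
    (hyp3F2_term n ((real n + 4) / 2) ((real n + 3) / 2) (4/3) (5/3) 1 = 2 * (1 - (9 * real n + 10) * (-8) ^ (n + 1)) / (81 * (real n + 1) * (real n + 2) * 4 ^ n))"
  using final1[OF assms] final2[OF assms] final3[OF assms] final4[OF assms] final5[OF assms] final6[OF assms]
  by blast

end
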